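(* Let $D=\mathrm{diag}(d_1,\dots,d_n)\in\mathbb{D}^n_+$, $W\in\mathbb{R}^{n\times n}$, $u\in\mathbb{R}^n$, $A:=W-D$, and $\mathcal X=\{x\in\mathbb{R}^n: Dx\in[0,1]^n\}$. For $\tau>0$ define $f_\tau:\mathcal X\to\mathbb{R}^n$ by $f_\tau(x)=\frac1\tau\left(-Dx+[Dx+\tau(Ax+u)]_0^1\right)$. Then: (i) the set of equilibria $\{x\in\mathcal X: f_\tau(x)=0\}$ does not depend on $\tau>0$; (ii) if $A$ is Lyapunov diagonally stable, then this common equilibrium set consists of exactly one point.
   Context: $\mathbb{D}^n_+$ is the set of $n\times n$ diagonal matrices with positive diagonal entries; $[z]_0^1=\max(0,\min(z,1))$ elementwise. A matrix $M$ is Lyapunov diagonally stable if $M^\top\Lambda+\Lambda M\prec0$ for some $\Lambda\in\mathbb{D}^n_+$. *)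

theory Defs
  imports "HOL-Analysis.Analysis"
begin

definition pos_diag :: "real^'n^'n \<Rightarrow> bool" where
  "pos_diag D \<longleftrightarrow> (\<forall>i j. i \<noteq> j \<longrightarrow> D $ i $ j = 0) \<and> (\<forall>i. D $ i $ i > 0)"

definition neg_def :: "real^'n^'n \<Rightarrow> bool" where
  "neg_def M \<longleftrightarrow> (\<forall>x. x \<noteq> 0 \<longrightarrow> x \<bullet> (M *v x) < 0)"

definition lyap_diag_stable :: "real^'n^'n \<Rightarrow> bool" where
  "lyap_diag_stable M \<longleftrightarrow>
     (\<exists>\<Lambda>. pos_diag \<Lambda> \<and> neg_def (transpose M ** \<Lambda> + \<Lambda> ** M))"

definition clip01 :: "real^'n \<Rightarrow> real^'n" where
  "clip01 z = (\<chi> i. max 0 (min (z $ i) 1))"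

definition dom_X :: "real^'n^'n \<Rightarrow> (real^'n) set" where
  "dom_X D = {x. \<forall>i. 0 \<le> (D *v x) $ i \<and> (D *v x) $ i \<le> 1}"

definition f_tau :: "real^'n^'n \<Rightarrow> real^'n^'n \<Rightarrow> real^'n \<Rightarrow> real \<Rightarrow> real^'n \<Rightarrow> real^'n" where
  "f_tau D W u \<tau> x =
     (1 / \<tau>) *\<^sub>R (- (D *v x) + clip01 (D *v x + \<tau> *\<^sub>R ((W - D) *v x + u)))"

definition equilibria :: "real^'n^'n \<Rightarrow> real^'n^'n \<Rightarrow> real^'n \<Rightarrow> real \<Rightarrow> (real^'n) set" where
  "equilibria D W u \<tau> = {x \<in> dom_X D. f_tau D W u \<tau> x = 0}"

end

theory Submission
  imports Defs
begin

lemma diag_mv: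
  assumes "pos_diag D"
  shows "(D *v x) $ i = D $ i $ i * x $ i"
proof -
  have "(D *v x) $ i = (\<Sum>j\<in>UNIV. D $ i $ j * x $ j)"
    by (simp add: matrix_vector_mult_def)
  also have "\<dots> = (\<Sum>j\<in>UNIV. if j = i then D $ i $ i * x $ i else 0)"
    using assms unfolding pos_diag_def by (intro sum.cong) auto
  also have "\<dots> = D $ i $ i * x $ i" by simp
  finally show ?thesis .
qed

lemma clip_fix:
  fixes y g t :: real
  assumes "0 \<le> y" "y \<le> 1" "t > 0"
  shows "(max 0 (min (y + t * g) 1) = y) \<longleftrightarrow> (g = 0 \<or> (y = 0 \<and> g \<le> 0) \<or> (y = 1 \<and> g \<ge> 0))"
proof (cases "g > 0")
  case True
  then have "t * g > 0" using assms by simp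
  then show ?thesis using True assms by (smt (verit))
next
  case False
  show ?thesis
  proof (cases "g < 0")
    case True
    then have "t * g < 0" using assms by (simp add: mult_pos_neg)
    then show ?thesis using True assms by (smt (verit))
  next
    case False
    then have "g = 0" using \<open>\<not> g > 0\<close> by simp
    then show ?thesis using assms by auto
  qed
qed

definition eqc :: "real^'n^'n \<Rightarrow> real^'n^'n \<Rightarrow> real^'n \<Rightarrow> real^'n \<Rightarrow> bool" where
  "eqc D W u x \<longleftrightarrow> x \<in> dom_X D \<and> (\<forall>i. ((W - D) *v x + u) $ i = 0
     \<or> ((D *v x) $ i = 0 \<and> ((W - D) *v x + u) $ i \<le> 0)
     \<or> ((D *v x) $ i = 1 \<and> ((W - D) *v x + u) $ i \<ge> 0))"

lemma equilibria_char:
  assumes "t > 0"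
  shows "x \<in> equilibria D W u t \<longleftrightarrow> eqc D W u x"
proof -
  have "f_tau D W u t x = 0 \<longleftrightarrow> clip01 (D *v x + t *\<^sub>R ((W - D) *v x + u)) = D *v x"
    using assms unfolding f_tau_def by (auto simp: algebra_simps)
  also have "\<dots> \<longleftrightarrow> (\<forall>i. max 0 (min ((D *v x) $ i + t * ((W - D) *v x + u) $ i) 1) = (D *v x) $ i)"
    unfolding clip01_def by (auto simp: vec_eq_iff)
  finally have *: "f_tau D W u t x = 0 \<longleftrightarrow> (\<forall>i. max 0 (min ((D *v x) $ i + t * ((W - D) *v x + u) $ i) 1) = (D *v x) $ i)" .
  show ?thesis
  proof
    assume "x \<in> equilibria D W u t"
    then show "eqc D W u x" unfolding equilibria_def eqc_def dom_X_def using * clip_fix[OF _ _ assms]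
      by auto
  next
    assume "eqc D W u x"
    then show "x \<in> equilibria D W u t" unfolding equilibria_def eqc_def dom_X_def using * clip_fix[OF _ _ assms]
      by auto
  qed
qed

lemma vi:
  fixes y g y' :: real
  assumes "g = 0 \<or> (y = 0 \<and> g \<le> 0) \<or> (y = 1 \<and> g \<ge> 0)" "0 \<le> y'" "y' \<le> 1"
  shows "g * (y' - y) \<le> 0"
  using assms by (auto intro: mult_nonpos_nonneg mult_nonneg_nonpos)

lemma uniq:
  assumes D: "pos_diag D" and L: "lyap_diag_stable (W - D)"
    and x: "eqc D W u x" and x': "eqc D W u x'"
  shows "x = x'"
proof (rule ccontr)
  assume ne: "x \<noteq> x'"
  define A where "A = W - D"
  define e where "e = x - x'"
  have e0: "e \<noteq> 0" using ne e_def by simp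
  obtain \<Lambda> where P: "pos_diag \<Lambda>" and N: "neg_def (transpose A ** \<Lambda> + \<Lambda> ** A)"
    using L unfolding lyap_diag_stable_def A_def by blast
  have comp: "(A *v e) $ i * e $ i \<ge> 0" for i
  proof -
    let ?g = "(A *v x + u) $ i" and ?g' = "(A *v x' + u) $ i"
    let ?y = "(D *v x) $ i" and ?y' = "(D *v x') $ i"
    have h1: "?g * (?y' - ?y) \<le> 0"
      using x x' unfolding eqc_def dom_X_def A_def by (intro vi) auto
    have h2: "?g' * (?y - ?y') \<le> 0"
      using x x' unfolding eqc_def dom_X_def A_def by (intro vi) auto
    have "(?g - ?g') * (?y - ?y') \<ge> 0" using h1 h2 by (simp add: algebra_simps)
    moreover have "?g - ?g' = (A *v e) $ i" unfolding e_def by (simp add: matrix_vector_mult_diff_distrib)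
    moreover have "?y - ?y' = D $ i $ i * e $ i" unfolding e_def using diag_mv[OF D] by (simp add: algebra_simps)
    ultimately have "D $ i $ i * ((A *v e) $ i * e $ i) \<ge> 0" by (simp add: algebra_simps)
    moreover have "D $ i $ i > 0" using D unfolding pos_diag_def by auto
    ultimately show ?thesis by (simp add: zero_le_mult_iff)
  qed
  define S where "S = (\<Sum>i\<in>UNIV. \<Lambda> $ i $ i * ((A *v e) $ i * e $ i))"
  have S0: "S \<ge> 0" unfolding S_def
    using P comp unfolding pos_diag_def by (intro sum_nonneg mult_nonneg_nonneg[OF less_imp_le comp]) auto
  have t1: "e \<bullet> ((\<Lambda> ** A) *v e) = S"
    unfolding S_def matrix_vector_mul_assoc[symmetric] inner_vec_def
    by (intro sum.cong) (auto simp: diag_mv[OF P])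
  have t2: "e \<bullet> ((transpose A ** \<Lambda>) *v e) = S"
  proof -
    have "e \<bullet> ((transpose A ** \<Lambda>) *v e) = e \<bullet> (transpose A *v (\<Lambda> *v e))"
      by (simp add: matrix_vector_mul_assoc)
    also have "\<dots> = (A *v e) \<bullet> (\<Lambda> *v e)"
      by (metis dot_lmul_matrix vector_transpose_matrix inner_commute)
    also have "\<dots> = S" unfolding S_def inner_vec_def
      by (intro sum.cong) (auto simp: diag_mv[OF P])
    finally show ?thesis .
  qed
  have "e \<bullet> ((transpose A ** \<Lambda> + \<Lambda> ** A) *v e) < 0" using N e0 unfolding neg_def_def by blast
  moreover have "e \<bullet> ((transpose A ** \<Lambda> + \<Lambda> ** A) *v e) = 2 * S"
    using t1 t2 by (simp add: matrix_vector_mult_add_rdistrib inner_add_right)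
  ultimately show False using S0 by simp
qed


theorem proposition2:
  fixes D W :: "real^'n^'n" and u :: "real^'n"
  assumes "pos_diag D"
  shows "(\<forall>\<tau>1 \<tau>2. \<tau>1 > 0 \<longrightarrow> \<tau>2 > 0 \<longrightarrow> equilibria D W u \<tau>1 = equilibria D W u \<tau>2)
       \<and> (lyap_diag_stable (W - D) \<longrightarrow> (\<forall>\<tau>>0. \<exists>!x. x \<in> equilibria D W u \<tau>))"
proof -
  have dpos: "\<And>i. D $ i $ i > 0" using assms unfolding pos_diag_def by auto
  have part1: "\<forall>\<tau>1 \<tau>2. \<tau>1 > 0 \<longrightarrow> \<tau>2 > 0 \<longrightarrow> equilibria D W u \<tau>1 = equilibria D W u \<tau>2"
    using equilibria_char by blast
  have ex: "\<exists>x. x \<in> equilibria D W u t" if t: "t > 0" for t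
  proof -
    define b :: "real^'n" where "b = (\<chi> i. 1 / D $ i $ i)"
    define S where "S = cbox (0::real^'n) b"
    define h where "h = (\<lambda>x. D *v x + t *\<^sub>R ((W - D) *v x + u))"
    define g where "g = (\<lambda>x. \<chi> i. max 0 (min (h x $ i) 1) / D $ i $ i)"
    have memS: "x \<in> S \<longleftrightarrow> x \<in> dom_X D" for x
    proof -
      have "0 \<le> x $ i \<and> x $ i \<le> 1 / D $ i $ i \<longleftrightarrow> 0 \<le> D $ i $ i * x $ i \<and> D $ i $ i * x $ i \<le> 1" for i
        using dpos[of i] by (simp add: zero_le_mult_iff field_simps)
      then show ?thesis unfolding S_def dom_X_def mem_box_cart b_def using diag_mv[OF assms] by simp
    qed
    have hc: "continuous_on S h" unfolding h_def
      by (intro continuous_intros linear_continuous_on matrix_vector_mul_linear bounded_linear_intros)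
    have gc: "continuous_on S g" unfolding g_def
      by (intro continuous_intros hc) (metis dpos less_irrefl)
    have gS: "g \<in> S \<rightarrow> S"
    proof
      fix x assume "x \<in> S"
      have "0 \<le> g x $ i \<and> g x $ i \<le> 1 / D $ i $ i" for i
        using dpos[of i] unfolding g_def by (auto simp: divide_right_mono)
      then show "g x \<in> S" unfolding S_def mem_box_cart b_def by simp
    qed
    have "0 \<in> S" unfolding S_def mem_box_cart b_def using dpos by (simp add: less_imp_le)
    then have Sne: "S \<noteq> {}" by blast
    obtain x where xS: "x \<in> S" and fx: "g x = x"
    proof -
      have cS: "compact S" and vS: "convex S" unfolding S_def by (simp_all add: compact_cbox convex_box)
      show ?thesis by (rule brouwer[OF cS vS Sne gc gS]) (rule that)
    qed
    have "D *v x = clip01 (h x)"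
    proof -
      have "(D *v x) $ i = clip01 (h x) $ i" for i
      proof -
        have "x $ i = max 0 (min (h x $ i) 1) / D $ i $ i" using arg_cong[OF fx, of "\<lambda>v. v $ i"] unfolding g_def by simp
        then show ?thesis using diag_mv[OF assms] dpos[of i] unfolding clip01_def by simp
      qed
      then show ?thesis by (simp add: vec_eq_iff)
    qed
    then have "f_tau D W u t x = 0" unfolding f_tau_def h_def by simp
    then show ?thesis using xS memS unfolding equilibria_def by blast
  qed
  show ?thesis
  proof (intro conjI part1 impI allI)
    fix t :: real assume L: "lyap_diag_stable (W - D)" and t: "t > 0"
    show "\<exists>!x. x \<in> equilibria D W u t"
      using ex[OF t] uniq[OF assms L] equilibria_char[OF t] by blast
  qed
qed

end
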